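(* Let $n$ be a positive integer. (a) $\mu(n,2)=\lceil 2n/3\rceil$. (b) If $n\ge 2$, then $\mu^*(n,2)=2\lceil n/3\rceil$, and this is the least even integer not less than $\mu(n,2)$.
   Context: Let $\mathbb F_2=\{0,1\}$ be the field with two elements. For $u\in\mathbb F_2^n$, $|u|$ denotes the Hamming weight of $u$ (the number of entries equal to $1$). A wiring on $n$ vertices is a matrix $W=(w_{i,j})\in M(n,n;\mathbb F_2)$ with $w_{i,i}=1$ for all $i$ (pressing button $j$ toggles bulb $i$ iff $w_{i,j}=1$). The degree of vertex $j$ is the number of $1$s in the $j$th column of $W$, and $\deg(W)$ is the maximum degree over all vertices. For $c\in\mathbb F_2^n$ (initial configuration), $M(W,c)=\max\{|Wx+c| : x\in\mathbb F_2^n\}$. For $n,m\ge1$, $A(n,m)$ is the set of wirings on $n$ vertices with $\deg(W)\le m$; for $n\ge m$, $A^*(n,m)$ is the set of wirings on $n$ vertices in which every vertex has degree exactly $m$. Define $\mu(n,m)=\min\{M(W,0): W\in A(n,m)\}$ and, for $n\ge m$, $\mu^*(n,m)=\min\{M(W,0): W\in A^*(n,m)\}$. *)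

theory Defs
  imports Complex_Main
begin

text \<open>Vectors in F_2^n are functions nat => bool (only indices < n matter);
  a matrix W in M(n,n;F_2) is a function nat => nat => bool, W i j = w_{i,j}.\<close>

definition weight :: "nat \<Rightarrow> (nat \<Rightarrow> bool) \<Rightarrow> nat" where
  "weight n u = card {i. i < n \<and> u i}"

text \<open>(W x + c)_i over F_2: parity of sum_j w_ij x_j, xor c_i.\<close>
definition mat_apply :: "nat \<Rightarrow> (nat \<Rightarrow> nat \<Rightarrow> bool) \<Rightarrow> (nat \<Rightarrow> bool) \<Rightarrow> (nat \<Rightarrow> bool) \<Rightarrow> (nat \<Rightarrow> bool)" where
  "mat_apply n W x c = (\<lambda>i. odd (card {j. j < n \<and> W i j \<and> x j}) \<noteq> c i)"

definition is_wiring :: "nat \<Rightarrow> (nat \<Rightarrow> nat \<Rightarrow> bool) \<Rightarrow> bool" where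
  "is_wiring n W = (\<forall>i<n. W i i)"

definition vdeg :: "nat \<Rightarrow> (nat \<Rightarrow> nat \<Rightarrow> bool) \<Rightarrow> nat \<Rightarrow> nat" where
  "vdeg n W j = card {i. i < n \<and> W i j}"

definition wdeg :: "nat \<Rightarrow> (nat \<Rightarrow> nat \<Rightarrow> bool) \<Rightarrow> nat" where
  "wdeg n W = Max ((vdeg n W) ` {..<n})"

definition Mval :: "nat \<Rightarrow> (nat \<Rightarrow> nat \<Rightarrow> bool) \<Rightarrow> (nat \<Rightarrow> bool) \<Rightarrow> nat" where
  "Mval n W c = Max {weight n (mat_apply n W x c) | x. \<forall>j. n \<le> j \<longrightarrow> \<not> x j}"

definition Aset :: "nat \<Rightarrow> nat \<Rightarrow> (nat \<Rightarrow> nat \<Rightarrow> bool) set" where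
  "Aset n m = {W. is_wiring n W \<and> (\<forall>i j. (n \<le> i \<or> n \<le> j) \<longrightarrow> \<not> W i j) \<and> wdeg n W \<le> m}"

definition Astar :: "nat \<Rightarrow> nat \<Rightarrow> (nat \<Rightarrow> nat \<Rightarrow> bool) set" where
  "Astar n m = {W. is_wiring n W \<and> (\<forall>i j. (n \<le> i \<or> n \<le> j) \<longrightarrow> \<not> W i j) \<and> (\<forall>j<n. vdeg n W j = m)}"

definition mu :: "nat \<Rightarrow> nat \<Rightarrow> nat" where
  "mu n m = Min {Mval n W (\<lambda>_. False) | W. W \<in> Aset n m}"

definition mu_star :: "nat \<Rightarrow> nat \<Rightarrow> nat" where
  "mu_star n m = Min {Mval n W (\<lambda>_. False) | W. W \<in> Astar n m}"

end

theory Submission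
  imports Defs
begin


definition bul :: "nat set \<Rightarrow> (nat\<Rightarrow>nat\<Rightarrow>bool) \<Rightarrow> nat set \<Rightarrow> nat \<Rightarrow> bool" where
  "bul V T X i = odd (card {j\<in>V. T i j \<and> j\<in>X})"

definition lit :: "nat set \<Rightarrow> (nat\<Rightarrow>nat\<Rightarrow>bool) \<Rightarrow> nat set \<Rightarrow> nat" where
  "lit V T X = card {i\<in>V. bul V T X i}"

definition good :: "nat set \<Rightarrow> (nat\<Rightarrow>nat\<Rightarrow>bool) \<Rightarrow> bool" where
  "good V T = (finite V \<and> (\<forall>j\<in>V. T j j) \<and>
     (\<forall>j\<in>V. \<forall>a\<in>V. \<forall>b\<in>V. T a j \<longrightarrow> T b j \<longrightarrow> a = j \<or> b = j \<or> a = b))"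

lemma odd_card_Un:
  assumes "finite A" "finite B" "A \<inter> B = {}"
  shows "odd (card (A \<union> B)) = (odd (card A) \<noteq> odd (card B))"
  using assms by (simp add: card_Un_disjoint)

lemma par3:
  assumes "a \<noteq> b" "a \<noteq> c" "b \<noteq> c"
  shows "odd (card {j\<in>{a,b,c}. P j}) = ((P a \<noteq> P b) \<noteq> P c)"
proof -
  have e: "{j\<in>{a,b,c}. P j} = (if P a then {a} else {}) \<union> (if P b then {b} else {}) \<union> (if P c then {c} else {})"
    by auto
  show ?thesis unfolding e using assms
    by (cases "P a"; cases "P b"; cases "P c"; simp)
qed

lemma par2:
  assumes "a \<noteq> b"
  shows "odd (card {j\<in>{a,b}. P j}) = (P a \<noteq> P b)"
proof -
  have e: "{j\<in>{a,b}. P j} = (if P a then {a} else {}) \<union> (if P b then {b} else {})"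
    by auto
  show ?thesis unfolding e using assms
    by (cases "P a"; cases "P b"; simp)
qed

lemma col:
  assumes "good V T" "j\<in>V" "a\<in>V" "T a j" "a\<noteq>j" "i \<in> V"
  shows "T i j \<longleftrightarrow> (i = j \<or> i = a)"
  using assms unfolding good_def by metis

lemma bul_split:
  assumes "finite V" "S \<subseteq> V" "X' \<subseteq> V - S" "Y \<subseteq> S"
  shows "bul V T (X'\<union>Y) i = (odd (card {j\<in>V-S. T i j \<and> j\<in>X'}) \<noteq> odd (card {j\<in>S. T i j \<and> j\<in>Y}))"
proof -
  have "{j\<in>V. T i j \<and> j\<in>X'\<union>Y} = {j\<in>V-S. T i j \<and> j\<in>X'} \<union> {j\<in>S. T i j \<and> j\<in>Y}"
    using assms by auto
  moreover have "finite S" using assms finite_subset by blast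
  ultimately show ?thesis unfolding bul_def using assms
    by (subst odd_card_Un[symmetric]) auto
qed

lemma combine:
  assumes fin: "finite V" and SV: "S \<subseteq> V" and X': "X' \<subseteq> V - S" and Y: "Y \<subseteq> S"
    and eq: "\<forall>i\<in>V-S. bul V T (X'\<union>Y) i = bul (V-S) T' X' i"
    and ih: "2*card(V-S) \<le> 3*lit (V-S) T' X'"
    and loc: "2*card S \<le> 3*card{i\<in>S. bul V T (X'\<union>Y) i}"
  shows "2*card V \<le> 3*lit V T (X'\<union>Y)"
proof -
  have fS: "finite S" using fin SV finite_subset by blast
  have "{i\<in>V. bul V T (X'\<union>Y) i} = {i\<in>V-S. bul (V-S) T' X' i} \<union> {i\<in>S. bul V T (X'\<union>Y) i}"
    using eq SV by auto
  hence "lit V T (X'\<union>Y) = lit (V-S) T' X' + card {i\<in>S. bul V T (X'\<union>Y) i}"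
    unfolding lit_def using fin fS by (simp add: card_Un_disjoint disjoint_iff)
  moreover have "card V = card (V-S) + card S" using fin SV fS
    by (metis card_Diff_subset le_add_diff_inverse2 card_mono)
  ultimately show ?thesis using ih loc by simp
qed

lemma good_sub: "good V T \<Longrightarrow> V' \<subseteq> V \<Longrightarrow> good V' T"
  unfolding good_def by (meson finite_subset subsetD)

definition ok :: "nat set \<Rightarrow> (nat\<Rightarrow>nat\<Rightarrow>bool) \<Rightarrow> bool" where
  "ok V T = (\<exists>X\<subseteq>V. 2*card V \<le> 3*lit V T X)"

lemma typeR:
  assumes g: "good V T" and SV: "S \<subseteq> V"
   and fwd: "\<forall>j\<in>S. \<forall>i\<in>V. T i j \<longrightarrow> i\<in>S"
   and IH: "ok (V-S) T"
   and loc: "\<forall>X'\<subseteq>V-S. \<exists>Y\<subseteq>S. 2*card S \<le> 3*card{i\<in>S. bul V T (X'\<union>Y) i}"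
  shows "ok V T"
proof -
  have fin: "finite V" using g good_def by auto
  obtain X' where X': "X' \<subseteq> V-S" "2*card(V-S) \<le> 3*lit (V-S) T X'" using IH unfolding ok_def by blast
  obtain Y where Y: "Y \<subseteq> S" "2*card S \<le> 3*card{i\<in>S. bul V T (X'\<union>Y) i}" using loc X'(1) by blast
  have eq: "\<forall>i\<in>V-S. bul V T (X'\<union>Y) i = bul (V-S) T X' i"
  proof
    fix i assume i: "i \<in> V-S"
    have "{j\<in>V. T i j \<and> j\<in>X'\<union>Y} = {j\<in>V-S. T i j \<and> j\<in>X'}"
      using i fwd X' Y by auto
    thus "bul V T (X'\<union>Y) i = bul (V-S) T X' i" unfolding bul_def by simp
  qed
  have "2*card V \<le> 3*lit V T (X'\<union>Y)"
    by (rule combine[OF fin SV X'(1) Y(1) eq X'(2) Y(2)])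
  moreover have "X'\<union>Y \<subseteq> V" using X' Y SV by auto
  ultimately show ?thesis unfolding ok_def by blast
qed

lemma locR1:
  assumes "finite V" "v \<in> V" "T v v"
  shows "\<forall>X'\<subseteq>V-{v}. \<exists>Y\<subseteq>{v}. 2*card {v} \<le> 3*card{i\<in>{v}. bul V T (X'\<union>Y) i}"
proof (intro allI impI)
  fix X' assume X': "X' \<subseteq> V - {v}"
  define c where "c = odd (card {j\<in>V-{v}. T v j \<and> j\<in>X'})"
  define Y where "Y = (if c then {} else {v})"
  have Y: "Y \<subseteq> {v}" unfolding Y_def by auto
  have "{j\<in>{v}. T v j \<and> j\<in>Y} = Y" using assms unfolding Y_def by auto
  hence "bul V T (X'\<union>Y) v" using bul_split[OF assms(1) _ X' Y, of T v] assms
    unfolding c_def[symmetric] by (simp add: Y_def)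
  hence "{i\<in>{v}. bul V T (X'\<union>Y) i} = {v}" by auto
  thus "\<exists>Y\<subseteq>{v}. 2*card {v} \<le> 3*card{i\<in>{v}. bul V T (X'\<union>Y) i}"
    using Y by (intro exI[of _ Y]) auto
qed

lemma locR2:
  assumes "finite V" "v \<in> V" "u \<in> V" "v \<noteq> u" "T v v" "T u v"
    and noin: "\<forall>j\<in>V-{v,u}. \<not> T v j \<and> \<not> T u j"
  shows "\<forall>X'\<subseteq>V-{v,u}. \<exists>Y\<subseteq>{v,u}. 2*card {v,u} \<le> 3*card{i\<in>{v,u}. bul V T (X'\<union>Y) i}"
proof (intro allI impI)
  fix X' assume X': "X' \<subseteq> V - {v,u}"
  have Y: "{v} \<subseteq> {v,u}" by auto
  have sv: "{v,u} \<subseteq> V" using assms by auto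
  have e0: "\<And>i. i \<in> {v,u} \<Longrightarrow> {j\<in>V-{v,u}. T i j \<and> j\<in>X'} = {}" using noin by auto
  have e1: "\<And>i. i \<in> {v,u} \<Longrightarrow> {j\<in>{v,u}. T i j \<and> j\<in>{v}} = {v}" using assms by auto
  have "bul V T (X'\<union>{v}) v" "bul V T (X'\<union>{v}) u"
    unfolding bul_split[OF assms(1) sv X' Y, of T v] bul_split[OF assms(1) sv X' Y, of T u]
      e0[of v, OF insertI1] e0[of u, OF insertI2[OF insertI1]] e1[of v, OF insertI1] e1[of u, OF insertI2[OF insertI1]] by simp_all
  hence "{i\<in>{v,u}. bul V T (X'\<union>{v}) i} = {v,u}" by auto
  thus "\<exists>Y\<subseteq>{v,u}. 2*card {v,u} \<le> 3*card{i\<in>{v,u}. bul V T (X'\<union>Y) i}"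
    using Y by (intro exI[of _ "{v}"]) auto
qed

lemma locR3:
  assumes "finite V" "a \<in> V" "b \<in> V" "c \<in> V" "a \<noteq> b" "a \<noteq> c" "b \<noteq> c"
   and "T a a" "T b b" "T c c" "\<not> T a b" "\<not> T a c" "\<not> T c a" "T c b"
  shows "\<forall>X'\<subseteq>V-{a,b,c}. \<exists>Y\<subseteq>{a,b,c}. 2*card {a,b,c} \<le> 3*card{i\<in>{a,b,c}. bul V T (X'\<union>Y) i}"
proof (intro allI impI)
  fix X' assume X': "X' \<subseteq> V - {a,b,c}"
  define ca where "ca = odd (card {j\<in>V-{a,b,c}. T a j \<and> j\<in>X'})"
  define cc where "cc = odd (card {j\<in>V-{a,b,c}. T c j \<and> j\<in>X'})"
  define Q where "Q = (\<lambda>j. (j = a \<and> \<not> ca) \<or> (j = b \<and> \<not> cc))"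
  define Y where "Y = {j\<in>{a,b,c}. Q j}"
  have Y: "Y \<subseteq> {a,b,c}" unfolding Y_def by auto
  have sv: "{a,b,c} \<subseteq> V" using assms by auto
  have ea: "\<And>i. {j\<in>{a,b,c}. T i j \<and> j\<in>Y} = {j\<in>{a,b,c}. T i j \<and> Q j}"
    unfolding Y_def by auto
  have pa: "\<And>i. odd (card {j\<in>{a,b,c}. T i j \<and> Q j}) = (((T i a \<and> Q a) \<noteq> (T i b \<and> Q b)) \<noteq> (T i c \<and> Q c))"
    by (rule par3) (use assms in auto)
  have b1: "bul V T (X'\<union>Y) a = (ca \<noteq> (((T a a \<and> Q a) \<noteq> (T a b \<and> Q b)) \<noteq> (T a c \<and> Q c)))"
    using bul_split[OF assms(1) sv X' Y, of T a] unfolding ea pa ca_def .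
  have b2: "bul V T (X'\<union>Y) c = (cc \<noteq> (((T c a \<and> Q a) \<noteq> (T c b \<and> Q b)) \<noteq> (T c c \<and> Q c)))"
    using bul_split[OF assms(1) sv X' Y, of T c] unfolding ea pa cc_def .
  have "bul V T (X'\<union>Y) a" "bul V T (X'\<union>Y) c"
    unfolding b1 b2 using assms by (auto simp: Q_def)
  hence "{a,c} \<subseteq> {i\<in>{a,b,c}. bul V T (X'\<union>Y) i}" by auto
  hence "card {a,c} \<le> card {i\<in>{a,b,c}. bul V T (X'\<union>Y) i}" by (intro card_mono) auto
  moreover have "card {a,b,c} = 3" "card {a,c} = 2" using assms by auto
  ultimately show "\<exists>Y\<subseteq>{a,b,c}. 2*card {a,b,c} \<le> 3*card{i\<in>{a,b,c}. bul V T (X'\<union>Y) i}"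
    using Y by (intro exI[of _ Y]) auto
qed

lemma locR4:
  assumes "finite V" "a \<in> V" "b \<in> V" "c \<in> V" "a \<noteq> b" "a \<noteq> c" "b \<noteq> c"
   and "T a a" "T b b" "T c c" "\<not> T a b" "T a c" "T b a" "\<not> T b c"
  shows "\<forall>X'\<subseteq>V-{a,b,c}. \<exists>Y\<subseteq>{a,b,c}. 2*card {a,b,c} \<le> 3*card{i\<in>{a,b,c}. bul V T (X'\<union>Y) i}"
proof (intro allI impI)
  fix X' assume X': "X' \<subseteq> V - {a,b,c}"
  define ca where "ca = odd (card {j\<in>V-{a,b,c}. T a j \<and> j\<in>X'})"
  define cb where "cb = odd (card {j\<in>V-{a,b,c}. T b j \<and> j\<in>X'})"
  define Q where "Q = (\<lambda>j. (j = a \<and> \<not> ca) \<or> (j = b \<and> cb \<noteq> ca))"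
  define Y where "Y = {j\<in>{a,b,c}. Q j}"
  have Y: "Y \<subseteq> {a,b,c}" unfolding Y_def by auto
  have sv: "{a,b,c} \<subseteq> V" using assms by auto
  have ea: "\<And>i. {j\<in>{a,b,c}. T i j \<and> j\<in>Y} = {j\<in>{a,b,c}. T i j \<and> Q j}"
    unfolding Y_def by auto
  have pa: "\<And>i. odd (card {j\<in>{a,b,c}. T i j \<and> Q j}) = (((T i a \<and> Q a) \<noteq> (T i b \<and> Q b)) \<noteq> (T i c \<and> Q c))"
    by (rule par3) (use assms in auto)
  have b1: "bul V T (X'\<union>Y) a = (ca \<noteq> (((T a a \<and> Q a) \<noteq> (T a b \<and> Q b)) \<noteq> (T a c \<and> Q c)))"
    using bul_split[OF assms(1) sv X' Y, of T a] unfolding ea pa ca_def .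
  have b2: "bul V T (X'\<union>Y) b = (cb \<noteq> (((T b a \<and> Q a) \<noteq> (T b b \<and> Q b)) \<noteq> (T b c \<and> Q c)))"
    using bul_split[OF assms(1) sv X' Y, of T b] unfolding ea pa cb_def .
  have "bul V T (X'\<union>Y) a" "bul V T (X'\<union>Y) b"
    unfolding b1 b2 using assms by (auto simp: Q_def)
  hence "{a,b} \<subseteq> {i\<in>{a,b,c}. bul V T (X'\<union>Y) i}" by auto
  hence "card {a,b} \<le> card {i\<in>{a,b,c}. bul V T (X'\<union>Y) i}" by (intro card_mono) auto
  moreover have "card {a,b,c} = 3" "card {a,b} = 2" using assms by auto
  ultimately show "\<exists>Y\<subseteq>{a,b,c}. 2*card {a,b,c} \<le> 3*card{i\<in>{a,b,c}. bul V T (X'\<union>Y) i}"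
    using Y by (intro exI[of _ Y]) auto
qed


lemma generic:
  assumes g: "good V T" and v: "v\<in>V" and u: "u\<in>V" and vu: "v\<noteq>u" and Tuv: "T u v"
   and hw: "w = u \<or> (w\<in>V \<and> w\<noteq>v \<and> w\<noteq>u \<and> T w u \<and> \<not>T u w \<and> \<not>T v w)"
   and hu: "\<forall>i\<in>V. T i u \<longrightarrow> i = u \<or> i = w"
   and IH: "\<And>T'. good (V-{v,u}) T' \<Longrightarrow> ok (V-{v,u}) T'"
  shows "ok V T"
proof -
  have fin: "finite V" and dg: "\<forall>j\<in>V. T j j"
    and un: "\<forall>j\<in>V. \<forall>a\<in>V. \<forall>b\<in>V. T a j \<longrightarrow> T b j \<longrightarrow> a = j \<or> b = j \<or> a = b"
    using g unfolding good_def by auto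
  define V' where "V' = V - {v,u}"
  define R where "R = {j\<in>V'. T v j \<or> T u j}"
  define T' where "T' = (\<lambda>i j. if j\<in>R then i=j \<or> i=w else T i j)"
  have colR: "\<And>i j. j \<in> R \<Longrightarrow> i \<in> V' \<Longrightarrow> T i j \<longleftrightarrow> i = j"
  proof -
    fix i j assume j: "j \<in> R" and i: "i \<in> V'"
    have jV: "j \<in> V" "j \<noteq> v" "j \<noteq> u" using j unfolding R_def V'_def by auto
    have iV: "i \<in> V" "i \<noteq> v" "i \<noteq> u" using i unfolding V'_def by auto
    show "T i j \<longleftrightarrow> i = j"
    proof (cases "T v j")
      case True
      then show ?thesis using col[OF g jV(1) v True _ iV(1)] jV iV by auto
    next
      case False
      hence "T u j" using j unfolding R_def by auto
      then show ?thesis using col[OF g jV(1) u _ _ iV(1)] jV iV by auto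
    qed
  qed
  have gT': "good V' T'"
    unfolding good_def
  proof (intro conjI ballI impI)
    show "finite V'" using fin V'_def by auto
  next
    fix j assume "j \<in> V'" thus "T' j j" using dg unfolding T'_def V'_def by auto
  next
    fix j a b assume j: "j \<in> V'" and a: "a \<in> V'" and b: "b \<in> V'" and ta: "T' a j" and tb: "T' b j"
    show "a = j \<or> b = j \<or> a = b"
    proof (cases "j \<in> R")
      case True thus ?thesis using ta tb unfolding T'_def by auto
    next
      case False thus ?thesis using ta tb un j a b unfolding T'_def V'_def by auto
    qed
  qed
  obtain X' where X': "X' \<subseteq> V'" "2*card V' \<le> 3*lit V' T' X'"
    using IH[of T'] gT' unfolding ok_def V'_def by blast
  define cv where "cv = odd (card {j\<in>V'. T v j \<and> j\<in>X'})"
  define cu where "cu = odd (card {j\<in>V'. T u j \<and> j\<in>X'})"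
  define Q where "Q = (\<lambda>j. (j = v \<and> \<not> cv) \<or> (j = u \<and> cv \<noteq> cu))"
  define Y where "Y = {j\<in>{v,u}. Q j}"
  have Y: "Y \<subseteq> {v,u}" unfolding Y_def by auto
  have sv: "{v,u} \<subseteq> V" using v u by auto
  have X'': "X' \<subseteq> V - {v,u}" using X' V'_def by auto
  have nTvu: "\<not> T v u" using hu v vu hw by auto
  have colv: "\<And>i. i \<in> V \<Longrightarrow> T i v \<longleftrightarrow> i = v \<or> i = u" using col[OF g v u Tuv] vu by auto
  have ea: "\<And>i. {j\<in>{v,u}. T i j \<and> j\<in>Y} = {j\<in>{v,u}. T i j \<and> Q j}"
    unfolding Y_def by auto
  have pa: "\<And>i. odd (card {j\<in>{v,u}. T i j \<and> Q j}) = ((T i v \<and> Q v) \<noteq> (T i u \<and> Q u))"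
    by (rule par2) (use vu in auto)
  have bs: "\<And>i. bul V T (X'\<union>Y) i = (odd (card {j\<in>V'. T i j \<and> j\<in>X'}) \<noteq> ((T i v \<and> Q v) \<noteq> (T i u \<and> Q u)))"
    by (simp only: bul_split[OF fin sv X'' Y] ea pa V'_def)
  have loc: "{i\<in>{v,u}. bul V T (X'\<union>Y) i} = {v,u}"
    using bs[of v] bs[of u] dg v u Tuv nTvu vu unfolding cv_def[symmetric] cu_def[symmetric] Q_def
    by auto
  have eq: "\<forall>i\<in>V-{v,u}. bul V T (X'\<union>Y) i = bul (V-{v,u}) T' X' i"
  proof
    fix i assume iV: "i \<in> V - {v,u}"
    hence i': "i \<in> V'" unfolding V'_def .
    have nTiv: "\<not> T i v" using colv iV by auto
    have Tiu: "T i u \<longleftrightarrow> i = w" using hu iV hw by auto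
    have full: "bul V T (X'\<union>Y) i = (odd (card {j\<in>V'. T i j \<and> j\<in>X'}) \<noteq> (i = w \<and> Q u))"
      using bs[of i] nTiv Tiu by simp
    show "bul V T (X'\<union>Y) i = bul (V-{v,u}) T' X' i"
    proof (cases "i = w")
      case False
      have "{j\<in>V'. T' i j \<and> j\<in>X'} = {j\<in>V'. T i j \<and> j\<in>X'}"
        using colR[OF _ i'] False unfolding T'_def by auto
      thus ?thesis using full False unfolding bul_def V'_def[symmetric] by simp
    next
      case True
      have wV': "w \<in> V'" "w \<noteq> u" using True i' vu iV by auto
      hence wR: "w \<notin> R" using hw unfolding R_def by auto
      define A where "A = {j\<in>V'. T w j \<and> j\<in>X'}"
      define Bv where "Bv = {j\<in>V'. T v j \<and> j\<in>X'}"
      define Bu where "Bu = {j\<in>V'. T u j \<and> j\<in>X'}"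
      have fV': "finite V'" using fin V'_def by auto
      have e1: "{j\<in>V'. T' w j \<and> j\<in>X'} = A \<union> (Bv \<union> Bu)"
        unfolding A_def Bv_def Bu_def T'_def R_def using wR colR[OF _ wV'(1)] unfolding R_def by auto
      have d1: "A \<inter> (Bv \<union> Bu) = {}"
        unfolding A_def Bv_def Bu_def using colR[OF _ wV'(1)] wR unfolding R_def by blast
      have d2: "Bv \<inter> Bu = {}"
        unfolding Bv_def Bu_def V'_def using un v u vu by blast
      have "bul V' T' X' w = (odd (card A) \<noteq> (cv \<noteq> cu))"
        unfolding bul_def e1 cv_def cu_def Bv_def[symmetric] Bu_def[symmetric]
        using d1 d2 fV' by (simp add: odd_card_Un A_def Bv_def Bu_def)
      thus ?thesis using full True wV' vu unfolding V'_def[symmetric] A_def Q_def by simp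
    qed
  qed
  have "2*card V \<le> 3*lit V T (X'\<union>Y)"
  proof (rule combine[OF fin sv X'' Y eq])
    show "2 * card (V - {v, u}) \<le> 3 * lit (V - {v, u}) T' X'" using X' V'_def by simp
    show "2 * card {v, u} \<le> 3 * card {i \<in> {v, u}. bul V T (X' \<union> Y) i}" unfolding loc by simp
  qed
  moreover have "X'\<union>Y \<subseteq> V" using X'' Y sv by auto
  ultimately show ?thesis unfolding ok_def by blast
qed


lemma main: "good V T \<Longrightarrow> ok V T"
proof (induction "card V" arbitrary: V T rule: less_induct)
  case less
  have g: "good V T" by fact
  have fin: "finite V" and dg: "\<forall>j\<in>V. T j j"
    using g unfolding good_def by auto
  have IH: "\<And>S T'. S \<subseteq> V \<Longrightarrow> S \<noteq> {} \<Longrightarrow> good (V - S) T' \<Longrightarrow> ok (V - S) T'"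
  proof -
    fix S T' assume S: "S \<subseteq> V" "S \<noteq> {}" and gg: "good (V - S) T'"
    have "card (V - S) < card V" using S fin
      by (metis Diff_subset card_seteq finite_subset Diff_eq_empty_iff double_diff order_refl not_less psubset_card_mono psubsetI)
    thus "ok (V - S) T'" using less gg by blast
  qed
  have IHT: "\<And>S. S \<subseteq> V \<Longrightarrow> S \<noteq> {} \<Longrightarrow> ok (V - S) T"
    using IH good_sub[OF g] by blast
  show ?case
  proof (cases "V = {}")
    case True thus ?thesis unfolding ok_def by auto
  next
    case Vne: False
    show ?thesis
    proof (cases "\<forall>j\<in>V. \<forall>i\<in>V. T i j \<longrightarrow> i = j")
      case True
      obtain v where v: "v \<in> V" using Vne by auto
      show ?thesis
        apply (rule typeR[OF g, of "{v}"])
        using v True IHT[of "{v}"] locR1[OF fin v] dg by auto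
    next
      case False
      then obtain v u where v: "v \<in> V" and u: "u \<in> V" and uv: "u \<noteq> v" and Tuv: "T u v" by blast
      have cv: "\<And>i. i \<in> V \<Longrightarrow> T i v \<longleftrightarrow> i = v \<or> i = u" using col[OF g v u Tuv uv] by blast
      show ?thesis
      proof (cases "\<forall>i\<in>V. T i u \<longrightarrow> i = u")
        case True
        show ?thesis
          by (rule generic[OF g v u uv[symmetric] Tuv, of u]) (use True IH u v in auto)
      next
        case False
        then obtain w where w: "w \<in> V" and wu: "w \<noteq> u" and Twu: "T w u" by blast
        have cu: "\<And>i. i \<in> V \<Longrightarrow> T i u \<longleftrightarrow> i = u \<or> i = w" using col[OF g u w Twu wu] by blast
        show ?thesis
        proof (cases "w = v")
          case wv: True
          show ?thesis
          proof (cases "\<exists>j\<in>V-{v,u}. T v j \<or> T u j")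
            case True
            then obtain j where j: "j \<in> V" "j \<noteq> v" "j \<noteq> u" and tj: "T v j \<or> T u j" by blast
            show ?thesis
            proof (cases "T u j")
              case True
              have cj: "\<And>i. i \<in> V \<Longrightarrow> T i j \<longleftrightarrow> i = j \<or> i = u" using col[OF g j(1) u True] j by blast
              have e: "{j,u,v} \<subseteq> V" "{j,u,v} \<noteq> {}" using j u v by auto
              show ?thesis
                apply (rule typeR[OF g e(1) _ IHT[OF e]])
                using cj cu cv wv apply blast
                apply (rule locR3[OF fin j(1) u v])
                using j uv dg v u w cj cu cv wv by auto
            next
              case False
              hence Tvj: "T v j" using tj by auto
              have cj: "\<And>i. i \<in> V \<Longrightarrow> T i j \<longleftrightarrow> i = j \<or> i = v" using col[OF g j(1) v Tvj] j by blast
              have e: "{j,v,u} \<subseteq> V" "{j,v,u} \<noteq> {}" using j u v by auto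
              show ?thesis
                apply (rule typeR[OF g e(1) _ IHT[OF e]])
                using cj cu cv wv apply blast
                apply (rule locR3[OF fin j(1) v u])
                using j uv dg v u w cj cu cv wv by auto
            qed
          next
            case False
            have e: "{v,u} \<subseteq> V" "{v,u} \<noteq> {}" using u v by auto
            show ?thesis
              apply (rule typeR[OF g e(1) _ IHT[OF e]])
              using cu cv wv apply blast
              apply (rule locR2[OF fin v u])
              using False uv dg v u Tuv Twu wv by auto
          qed
        next
          case wv: False
          show ?thesis
          proof (cases "\<exists>z\<in>V. z \<noteq> w \<and> T z w")
            case True
            then obtain z where z: "z \<in> V" "z \<noteq> w" "T z w" by blast
            have cw: "\<And>i. i \<in> V \<Longrightarrow> T i w \<longleftrightarrow> i = w \<or> i = z" using col[OF g w z(1) z(3) z(2)] by blast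
            have e: "{v,u,w} \<subseteq> V" "{v,u,w} \<noteq> {}" using u v w by auto
            show ?thesis
            proof (cases "z = u")
              case True
              show ?thesis
                apply (rule typeR[OF g e(1) _ IHT[OF e]])
                using cu cv cw True apply blast
                apply (rule locR3[OF fin v u w])
                using uv wu wv dg v u w cu cv cw True by auto
            next
              case zu: False
              show ?thesis
              proof (cases "z = v")
                case True
                show ?thesis
                  apply (rule typeR[OF g e(1) _ IHT[OF e]])
                  using cu cv cw True apply blast
                  apply (rule locR4[OF fin v u w])
                  using uv wu wv dg v u w cu cv cw True by auto
              next
                case False
                show ?thesis
                  by (rule generic[OF g v u uv[symmetric] Tuv, of w]) (use False zu wu wv w Twu cu cw uv IH u v in auto)
              qed
            qed
          next
            case False
            show ?thesis
              by (rule generic[OF g v u uv[symmetric] Tuv, of w]) (use False wu wv w Twu cu uv IH u v in auto)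
          qed
        qed
      qed
    qed
  qed
qed



lemma weight_le: "weight n u \<le> n"
proof -
  have "{i. i<n \<and> u i} \<subseteq> {..<n}" by auto
  hence "card {i. i<n \<and> u i} \<le> card {..<n::nat}" by (intro card_mono) auto
  thus ?thesis unfolding weight_def by simp
qed

lemma Mset_fin: "finite {weight n (mat_apply n W x c) | x. \<forall>j. n \<le> j \<longrightarrow> \<not> x j}"
  by (rule finite_subset[of _ "{..n}"]) (auto simp: weight_le)

lemma Mval_ge: "\<forall>j. n \<le> j \<longrightarrow> \<not> x j \<Longrightarrow> weight n (mat_apply n W x c) \<le> Mval n W c"
  unfolding Mval_def by (rule Max_ge[OF Mset_fin]) blast

lemma Mval_in: "\<exists>x. (\<forall>j. n \<le> j \<longrightarrow> \<not> x j) \<and> Mval n W c = weight n (mat_apply n W x c)"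
proof -
  have "Mval n W c \<in> {weight n (mat_apply n W x c) | x. \<forall>j. n \<le> j \<longrightarrow> \<not> x j}"
    unfolding Mval_def by (rule Max_in[OF Mset_fin]) blast
  thus ?thesis by blast
qed

lemma Mval_le_n: "Mval n W c \<le> n"
  using Mval_in[of n W c] weight_le by metis

lemma Mval_le: "(\<And>x. \<forall>j. n \<le> j \<longrightarrow> \<not> x j \<Longrightarrow> weight n (mat_apply n W x c) \<le> k) \<Longrightarrow> Mval n W c \<le> k"
  using Mval_in[of n W c] by metis

lemma mu_fin: "finite {Mval n W (\<lambda>_. False) | W. W \<in> A}"
  by (rule finite_subset[of _ "{..n}"]) (auto simp: Mval_le_n)

lemma mu_le: "W \<in> Aset n m \<Longrightarrow> mu n m \<le> Mval n W (\<lambda>_. False)"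
  unfolding mu_def by (rule Min_le[OF mu_fin]) blast

lemma mu_ge: "W0 \<in> Aset n m \<Longrightarrow> (\<And>W. W \<in> Aset n m \<Longrightarrow> P (Mval n W (\<lambda>_. False))) \<Longrightarrow> P (mu n m)"
proof -
  assume a: "W0 \<in> Aset n m" and b: "\<And>W. W \<in> Aset n m \<Longrightarrow> P (Mval n W (\<lambda>_. False))"
  have "mu n m \<in> {Mval n W (\<lambda>_. False) | W. W \<in> Aset n m}"
    unfolding mu_def by (rule Min_in[OF mu_fin]) (use a in blast)
  then obtain W where "mu n m = Mval n W (\<lambda>_. False)" "W \<in> Aset n m" by blast
  thus ?thesis using b by metis
qed

lemma mus_le: "W \<in> Astar n m \<Longrightarrow> mu_star n m \<le> Mval n W (\<lambda>_. False)"
  unfolding mu_star_def by (rule Min_le[OF mu_fin]) blast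

lemma mus_ge: "W0 \<in> Astar n m \<Longrightarrow> (\<And>W. W \<in> Astar n m \<Longrightarrow> P (Mval n W (\<lambda>_. False))) \<Longrightarrow> P (mu_star n m)"
proof -
  assume a: "W0 \<in> Astar n m" and b: "\<And>W. W \<in> Astar n m \<Longrightarrow> P (Mval n W (\<lambda>_. False))"
  have "mu_star n m \<in> {Mval n W (\<lambda>_. False) | W. W \<in> Astar n m}"
    unfolding mu_star_def by (rule Min_in[OF mu_fin]) (use a in blast)
  then obtain W where "mu_star n m = Mval n W (\<lambda>_. False)" "W \<in> Astar n m" by blast
  thus ?thesis using b by metis
qed

lemma weight_lit: "weight n (mat_apply n W (\<lambda>j. j \<in> X) (\<lambda>_. False)) = lit {..<n} W X"
proof -
  have "\<And>i. {j. j < n \<and> W i j \<and> j \<in> X} = {j\<in>{..<n}. W i j \<and> j\<in>X}" by auto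
  thus ?thesis unfolding weight_def mat_apply_def lit_def bul_def
    by (simp add: lessThan_def conj_commute)
qed

lemma Aset_good:
  assumes "W \<in> Aset n 2" "n \<ge> 1"
  shows "good {..<n} W"
proof -
  have wi: "\<forall>i<n. W i i" and wd: "wdeg n W \<le> 2" using assms(1) unfolding Aset_def is_wiring_def by auto
  have vd: "\<And>j. j < n \<Longrightarrow> vdeg n W j \<le> 2"
  proof -
    fix j assume "j < n"
    hence "vdeg n W j \<le> wdeg n W" unfolding wdeg_def by (intro Max_ge) auto
    thus "vdeg n W j \<le> 2" using wd by simp
  qed
  show ?thesis unfolding good_def
  proof (intro conjI ballI impI)
    fix j a b assume j: "j \<in> {..<n}" and a: "a \<in> {..<n}" and b: "b \<in> {..<n}" and "W a j" "W b j"
    show "a = j \<or> b = j \<or> a = b"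
    proof (rule ccontr)
      assume c: "\<not> (a = j \<or> b = j \<or> a = b)"
      have "{a,b,j} \<subseteq> {i. i < n \<and> W i j}" using a b j \<open>W a j\<close> \<open>W b j\<close> wi by auto
      hence "card {a,b,j} \<le> vdeg n W j" unfolding vdeg_def by (intro card_mono) auto
      moreover have "card {a,b,j} = 3" using c by auto
      ultimately show False using vd j by fastforce
    qed
  qed (use wi in auto)
qed

lemma lower:
  assumes "W \<in> Aset n 2" "n \<ge> 1"
  shows "2*n \<le> 3*Mval n W (\<lambda>_. False)"
proof -
  obtain X where X: "X \<subseteq> {..<n}" "2*card {..<n} \<le> 3*lit {..<n} W X"
    using main[OF Aset_good[OF assms]] unfolding ok_def by blast
  have "lit {..<n} W X \<le> Mval n W (\<lambda>_. False)"
    using Mval_ge[of n "\<lambda>j. j \<in> X" W "\<lambda>_. False"] X(1) unfolding weight_lit by (meson lessThan_iff not_less subsetD)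
  thus ?thesis using X(2) by simp
qed



lemma block_bound:
  assumes hb: "\<And>k j. k < K \<Longrightarrow> j < n \<Longrightarrow> (W (3*k) j \<longleftrightarrow> j = 3*k \<or> j = 3*k+2) \<and>
       (W (3*k+1) j \<longleftrightarrow> j = 3*k+1 \<or> j = 3*k) \<and> (W (3*k+2) j \<longleftrightarrow> j = 3*k+2 \<or> j = 3*k+1)"
   and hK: "3*K \<le> n"
  shows "weight n (mat_apply n W x (\<lambda>_. False)) \<le> n - K"
proof -
  define b where "b i = odd (card {j. j<n \<and> W i j \<and> x j})" for i
  have wt: "weight n (mat_apply n W x (\<lambda>_. False)) = card {i. i<n \<and> b i}"
    unfolding weight_def mat_apply_def b_def by simp
  define U where "U = {i. i<n \<and> \<not> b i}"
  have cn: "card {i. i<n \<and> b i} + card U = n"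
  proof -
    have "{i. i<n \<and> b i} \<union> U = {..<n}" "{i. i<n \<and> b i} \<inter> U = {}" unfolding U_def by auto
    thus ?thesis by (metis card_Un_disjoint card_lessThan finite_Un finite_lessThan)
  qed
  have nb: "\<not> (b (3*k) \<and> b (3*k+1) \<and> b (3*k+2))" if k: "k < K" for k
  proof -
    have lt: "3*k+2 < n" using k hK by simp
    have s1: "{j. j<n \<and> W (3*k) j \<and> x j} = {j\<in>{3*k, 3*k+2}. x j}" using hb[OF k] lt by auto
    have s2: "{j. j<n \<and> W (3*k+1) j \<and> x j} = {j\<in>{3*k+1, 3*k}. x j}" using hb[OF k] lt by auto
    have s3: "{j. j<n \<and> W (3*k+2) j \<and> x j} = {j\<in>{3*k+2, 3*k+1}. x j}" using hb[OF k] lt by auto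
    have "b (3*k) = (x (3*k) \<noteq> x (3*k+2))" unfolding b_def s1 by (rule par2) simp
    moreover have "b (3*k+1) = (x (3*k+1) \<noteq> x (3*k))" unfolding b_def s2 by (rule par2) simp
    moreover have "b (3*k+2) = (x (3*k+2) \<noteq> x (3*k+1))" unfolding b_def s3 by (rule par2) simp
    ultimately show ?thesis by auto
  qed
  define h where "h k = (if \<not> b (3*k) then 3*k else if \<not> b (3*k+1) then 3*k+1 else 3*k+2)" for k
  have hU: "h ` {..<K} \<subseteq> U"
  proof
    fix i assume "i \<in> h ` {..<K}"
    then obtain k where k: "k < K" and i: "i = h k" by auto
    have "3*k+2 < n" using k hK by simp
    thus "i \<in> U" using nb[OF k] unfolding i h_def U_def by auto
  qed
  have hd: "h k div 3 = k" for k unfolding h_def by auto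
  have "inj_on h {..<K}" by (metis hd inj_onI)
  hence "card (h ` {..<K}) = K" by (simp add: card_image)
  moreover have "card (h ` {..<K}) \<le> card U" using hU unfolding U_def by (intro card_mono) auto
  ultimately show ?thesis using wt cn by linarith
qed

definition gm :: "nat \<Rightarrow> nat" where "gm j = (if j mod 3 = 2 then j - 2 else j + 1)"
definition Wmu :: "nat \<Rightarrow> nat \<Rightarrow> nat \<Rightarrow> bool" where
  "Wmu n i j = (i < n \<and> j < n \<and> (i = j \<or> i = gm j))"

definition gs :: "nat \<Rightarrow> nat \<Rightarrow> nat" where
  "gs n j = (if j = n-1 then (if n mod 3 = 1 then n-4 else if n mod 3 = 2 then n-2 else n-3)
     else if n mod 3 = 1 \<and> j = n-2 then n-1 else gm j)"
definition Ws :: "nat \<Rightarrow> nat \<Rightarrow> nat \<Rightarrow> bool" where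
  "Ws n i j = (i < n \<and> j < n \<and> (i = j \<or> i = gs n j))"

lemma vdeg_le2: "vdeg n (\<lambda>i j. i < n \<and> j < n \<and> (i = j \<or> i = g j)) j \<le> 2"
proof -
  have "{i. i < n \<and> (i < n \<and> j < n \<and> (i = j \<or> i = g j))} \<subseteq> {j, g j}" by auto
  hence "vdeg n (\<lambda>i j. i < n \<and> j < n \<and> (i = j \<or> i = g j)) j \<le> card {j, g j}"
    unfolding vdeg_def by (intro card_mono) auto
  also have "\<dots> \<le> 2" by (simp add: card_insert_if)
  finally show ?thesis .
qed

lemma Wmu_in: "n \<ge> 1 \<Longrightarrow> Wmu n \<in> Aset n 2"
  unfolding Aset_def is_wiring_def wdeg_def
  using vdeg_le2[of n gm] by (auto simp: Wmu_def[abs_def] Max_le_iff lessThan_empty_iff)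

lemma Wmu_bound: "weight n (mat_apply n (Wmu n) x (\<lambda>_. False)) \<le> n - n div 3"
proof (rule block_bound)
  fix k j assume "k < n div 3" "j < n"
  thus "(Wmu n (3*k) j \<longleftrightarrow> j = 3*k \<or> j = 3*k+2) \<and>
       (Wmu n (3*k+1) j \<longleftrightarrow> j = 3*k+1 \<or> j = 3*k) \<and> (Wmu n (3*k+2) j \<longleftrightarrow> j = 3*k+2 \<or> j = 3*k+1)"
    unfolding Wmu_def gm_def by auto presburger+
qed simp



lemma gm3: "(gm j = 3*k \<longleftrightarrow> j = 3*k+2) \<and> (gm j = 3*k+1 \<longleftrightarrow> j = 3*k) \<and> (gm j = 3*k+2 \<longleftrightarrow> j = 3*k+1)"
  unfolding gm_def by presburger
lemma gs3: assumes "k < n div 3 - (if n mod 3 = 1 then 1 else 0)" "j < n"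
  shows "(gs n j = 3*k \<longleftrightarrow> j = 3*k+2) \<and> (gs n j = 3*k+1 \<longleftrightarrow> j = 3*k) \<and> (gs n j = 3*k+2 \<longleftrightarrow> j = 3*k+1)"
proof -
  obtain q r where n: "n = 3*q + r" "r < 3" by (metis div_mod_decomp mod_less_divisor zero_less_numeral mult.commute)
  have nd: "n div 3 = q" "n mod 3 = r" using n by auto
  have k: "k < q - (if r = 1 then 1 else 0)" using assms(1) nd by simp
  show ?thesis
  proof (cases "j = n - 1")
    case True
    thus ?thesis unfolding gs_def nd using n k by (cases "r = 0"; cases "r = 1"; simp; arith)
  next
    case F1: False
    show ?thesis
    proof (cases "r = 1 \<and> j = n-2")
      case True
      thus ?thesis unfolding gs_def nd using n k F1 by auto
    next
      case False
      hence "gs n j = gm j" unfolding gs_def nd using F1 by auto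
      thus ?thesis using gm3 by simp
    qed
  qed
qed

lemma gs_ok: assumes "n \<ge> 2" "j < n" shows "gs n j < n \<and> gs n j \<noteq> j"
proof -
  obtain q r where n: "n = 3*q + r" "r < 3" by (metis div_mod_decomp mod_less_divisor zero_less_numeral mult.commute)
  have nd: "n mod 3 = r" using n by auto
  show ?thesis
  proof (cases "j = n - 1")
    case True
    thus ?thesis unfolding gs_def nd using n assms by (cases "r = 0"; cases "r = 1"; simp; arith)
  next
    case F1: False
    show ?thesis
    proof (cases "r = 1 \<and> j = n-2")
      case True
      thus ?thesis unfolding gs_def nd using n assms F1 by auto
    next
      case False
      hence "gs n j = gm j" unfolding gs_def nd using F1 by auto
      thus ?thesis using F1 assms unfolding gm_def by auto
    qed
  qed
qed

lemma Ws_in: "n \<ge> 2 \<Longrightarrow> Ws n \<in> Astar n 2"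
proof -
  assume n: "n \<ge> 2"
  have g: "gs n j < n \<and> gs n j \<noteq> j" if "j < n" for j
    using gs_ok[OF n that] .
  have "vdeg n (Ws n) j = 2" if j: "j < n" for j
  proof -
    have "{i. i < n \<and> Ws n i j} = {j, gs n j}" using g[OF j] j unfolding Ws_def by auto
    thus ?thesis unfolding vdeg_def using g[OF j] by simp
  qed
  thus ?thesis unfolding Astar_def is_wiring_def Ws_def by auto
qed

lemma Ws_bound:
  assumes n: "n \<ge> 2"
  shows "weight n (mat_apply n (Ws n) x (\<lambda>_. False)) \<le> 2 * ((n+2) div 3)"
proof -
  define K where "K = n div 3 - (if n mod 3 = 1 then 1 else 0)"
  have "weight n (mat_apply n (Ws n) x (\<lambda>_. False)) \<le> n - K"
  proof (rule block_bound)
    fix k j assume "k < K" "j < n"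
    thus "(Ws n (3*k) j \<longleftrightarrow> j = 3*k \<or> j = 3*k+2) \<and>
       (Ws n (3*k+1) j \<longleftrightarrow> j = 3*k+1 \<or> j = 3*k) \<and> (Ws n (3*k+2) j \<longleftrightarrow> j = 3*k+2 \<or> j = 3*k+1)"
      using gs3[of k n j] unfolding Ws_def K_def by auto
  next
    show "3*K \<le> n" unfolding K_def by auto
  qed
  moreover have "n - K = 2 * ((n+2) div 3)"
  proof -
    obtain q r where n: "n = 3*q + r" "r < 3" by (metis div_mod_decomp mod_less_divisor zero_less_numeral mult.commute)
    have nd: "n div 3 = q" "n mod 3 = r" "(n+2) div 3 = q + (if r = 0 then 0 else 1)" using n by auto
    show ?thesis unfolding K_def nd using n assms by (cases "r = 0"; cases "r = 1"; simp; arith)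
  qed
  ultimately show ?thesis by simp
qed

lemma even_count: "finite I \<Longrightarrow> even (card {i\<in>I. odd (c i)}) = even (\<Sum>i\<in>I. (c i::nat))"
proof (induction I rule: finite_induct)
  case empty thus ?case by simp
next
  case (insert a I)
  have "{i\<in>insert a I. odd (c i)} = (if odd (c a) then insert a {i\<in>I. odd (c i)} else {i\<in>I. odd (c i)})"
    by auto
  thus ?case using insert by (auto simp: card_insert_if)
qed

lemma card_ind: "finite A \<Longrightarrow> card {j\<in>A. P j} = (\<Sum>j\<in>A. if P j then 1 else (0::nat))"
  by (simp add: sum.If_cases Int_def)

lemma Astar_even:
  assumes W: "W \<in> Astar n 2"
  shows "even (weight n (mat_apply n W x (\<lambda>_. False)))"
proof -
  have vd0: "\<And>j. j < n \<Longrightarrow> card {i\<in>{..<n}. W i j} = 2"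
    using W unfolding Astar_def vdeg_def by (auto simp: lessThan_def conj_commute)
  have vd: "(\<Sum>i<n. if W i j then 1 else (0::nat)) = 2" if "j < n" for j
    using vd0[OF that] card_ind[of "{..<n}" "\<lambda>i. W i j"] by simp
  define c where "c i = card {j\<in>{..<n}. W i j \<and> x j}" for i
  have wt: "weight n (mat_apply n W x (\<lambda>_. False)) = card {i\<in>{..<n}. odd (c i)}"
    unfolding weight_def mat_apply_def c_def by (simp add: lessThan_def conj_commute)
  have "(\<Sum>i<n. c i) = (\<Sum>i<n. \<Sum>j<n. if W i j \<and> x j then 1 else (0::nat))"
    unfolding c_def by (rule sum.cong[OF refl], rule card_ind, simp)
  also have "\<dots> = (\<Sum>j<n. \<Sum>i<n. if W i j \<and> x j then 1 else (0::nat))" by (rule sum.swap)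
  also have "\<dots> = (\<Sum>j<n. 2 * (if x j then 1 else 0))"
    by (rule sum.cong) (auto simp: vd)
  also have "\<dots> = 2 * (\<Sum>j<n. (if x j then 1 else 0))" by (simp add: sum_distrib_left)
  finally have "even (\<Sum>i<n. c i)" by simp
  thus ?thesis unfolding wt using even_count[of "{..<n}" c] by simp
qed




lemma qr: obtains q r where "n = 3*q + r" "r < (3::nat)"
  by (metis div_mod_decomp mod_less_divisor zero_less_numeral mult.commute)
lemma lt_cancel: "c*a < c*(b::nat) \<Longrightarrow> a < b"
  using mult_less_cancel1 by blast
lemma arith1: "2*n \<le> 3*m \<Longrightarrow> m \<le> n - n div 3 \<Longrightarrow> m = n - n div (3::nat)"
proof -
  assume a: "2*n \<le> 3*m" "m \<le> n - n div 3"
  obtain q r where n: "n = 3*q + r" "r < 3" using qr .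
  have d: "n div 3 = q" using n by auto
  have "r = 0 \<or> r = 1 \<or> r = 2" using n by auto
  moreover have "3*(2*q) < 3*m \<Longrightarrow> 2*q < m" "3*(2*q+1) < 3*m \<Longrightarrow> 2*q+1 < m" by (rule lt_cancel, assumption)+
  ultimately show ?thesis using a n unfolding d by auto
qed
lemma arith2: "even m \<Longrightarrow> 2*n \<le> 3*m \<Longrightarrow> m \<le> 2*((n+2) div 3) \<Longrightarrow> m = 2*((n+2) div (3::nat))"
proof -
  assume a: "even m" "2*n \<le> 3*m" "m \<le> 2*((n+2) div 3)"
  obtain q r where n: "n = 3*q + r" "r < 3" using qr .
  obtain t where t: "m = 2*t" using a(1) by blast
  show ?thesis
  proof (cases "r = 0")
    case True
    hence "(n+2) div 3 = q" using n by auto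
    thus ?thesis using a n t True by auto
  next
    case False
    hence d: "(n+2) div 3 = q + 1" using n by auto
    have "6*q < 6*t" using a n t False by auto
    hence "q < t" by (rule lt_cancel)
    thus ?thesis using a t d by linarith
  qed
qed
lemma arith3: "even k \<Longrightarrow> n - n div 3 \<le> k \<Longrightarrow> 2*((n+2) div 3) \<le> (k::nat)"
proof -
  assume a: "even k" "n - n div 3 \<le> k"
  obtain q r where n: "n = 3*q + r" "r < 3" using qr .
  obtain t where t: "k = 2*t" using a(1) by blast
  have d0: "n div 3 = q" using n by auto
  show ?thesis
  proof (cases "r = 0")
    case True
    hence "(n+2) div 3 = q" using n by auto
    thus ?thesis using a n t True d0 by auto
  next
    case False
    hence d: "(n+2) div 3 = q + 1" using n by auto
    have "2*q < 2*t" using a n t False d0 by auto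
    hence "q < t" by (rule lt_cancel)
    thus ?thesis using a t d by linarith
  qed
qed
lemma arith4: "n - n div 3 \<le> 2*((n+2) div (3::nat))"
proof -
  obtain q r where n: "n = 3*q + r" "r < 3" using qr .
  have "r = 0 \<or> r = 1 \<or> r = 2" using n by auto
  moreover have "(n+2) div 3 = q + (if r = 0 then 0 else 1)" "n div 3 = q" using n by auto
  ultimately show ?thesis using n by auto
qed

lemma ceil1: "\<lceil>2 * real n / 3\<rceil> = int (n - n div 3)"
proof (rule ceiling_unique)
  obtain q r where n: "n = 3*q + r" "r < 3" by (metis div_mod_decomp mod_less_divisor zero_less_numeral mult.commute)
  have e: "n - n div 3 = 2*q + r" using n by auto
  show "real_of_int (int (n - n div 3)) - 1 < 2 * real n / 3"
    unfolding e using n by (cases "r = 0"; cases "r = 1"; simp; linarith)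
  show "2 * real n / 3 \<le> real_of_int (int (n - n div 3))"
    unfolding e using n by (cases "r = 0"; cases "r = 1"; simp; linarith)
qed

lemma ceil2: "2 * \<lceil>real n / 3\<rceil> = int (2*((n+2) div 3))"
proof -
  have "\<lceil>real n / 3\<rceil> = int ((n+2) div 3)"
  proof (rule ceiling_unique)
    obtain q r where n: "n = 3*q + r" "r < 3" by (metis div_mod_decomp mod_less_divisor zero_less_numeral mult.commute)
    have e: "(n+2) div 3 = q + (if r = 0 then 0 else 1)" using n by auto
    show "real_of_int (int ((n+2) div 3)) - 1 < real n / 3"
      unfolding e using n by (cases "r = 0"; cases "r = 1"; simp; linarith)
    show "real n / 3 \<le> real_of_int (int ((n+2) div 3))"
      unfolding e using n by (cases "r = 0"; cases "r = 1"; simp; linarith)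
  qed
  thus ?thesis by simp
qed

lemma Astar_Aset: "n \<ge> 1 \<Longrightarrow> W \<in> Astar n 2 \<Longrightarrow> W \<in> Aset n 2"
  unfolding Astar_def Aset_def wdeg_def by (auto simp: Max_le_iff lessThan_empty_iff)

lemma mu_val: "n \<ge> 1 \<Longrightarrow> mu n 2 = n - n div 3"
proof -
  assume n: "n \<ge> 1"
  have a: "mu n 2 \<le> n - n div 3"
    using mu_le[OF Wmu_in[OF n]] Mval_le[of n "Wmu n" "\<lambda>_. False" "n - n div 3"] Wmu_bound by fastforce
  have b: "2*n \<le> 3*mu n 2"
    by (rule mu_ge[OF Wmu_in[OF n], of "\<lambda>m. 2*n \<le> 3*m"]) (rule lower[OF _ n])
  show ?thesis using arith1[OF b a] .
qed

lemma mus_val: "n \<ge> 2 \<Longrightarrow> mu_star n 2 = 2*((n+2) div 3)"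
proof -
  assume n: "n \<ge> 2"
  hence n1: "n \<ge> 1" by simp
  have a: "mu_star n 2 \<le> 2*((n+2) div 3)"
    using mus_le[OF Ws_in[OF n]] Mval_le[of n "Ws n" "\<lambda>_. False" "2*((n+2) div 3)"] Ws_bound[OF n] by fastforce
  have b: "even (mu_star n 2) \<and> 2*n \<le> 3*mu_star n 2"
  proof (rule mus_ge[OF Ws_in[OF n], of "\<lambda>m. even m \<and> 2*n \<le> 3*m"])
    fix W assume W: "W \<in> Astar n 2"
    obtain x where "Mval n W (\<lambda>_. False) = weight n (mat_apply n W x (\<lambda>_. False))"
      using Mval_in by blast
    hence "even (Mval n W (\<lambda>_. False))" using Astar_even[OF W] by simp
    thus "even (Mval n W (\<lambda>_. False)) \<and> 2*n \<le> 3*Mval n W (\<lambda>_. False)"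
      using lower[OF Astar_Aset[OF n1 W] n1] by simp
  qed
  show ?thesis using arith2 b a by blast
qed

theorem theorem1p1:
  fixes n :: nat
  assumes "n \<ge> 1"
  shows "int (mu n 2) = \<lceil>2 * real n / 3\<rceil> \<and>
         (n \<ge> 2 \<longrightarrow> int (mu_star n 2) = 2 * \<lceil>real n / 3\<rceil> \<and>
           mu_star n 2 = (LEAST k::nat. even k \<and> mu n 2 \<le> k))"
proof (intro conjI impI)
  show "int (mu n 2) = \<lceil>2 * real n / 3\<rceil>" using mu_val[OF assms] ceil1 by simp
next
  assume n: "n \<ge> 2"
  show "int (mu_star n 2) = 2 * \<lceil>real n / 3\<rceil>" using mus_val[OF n] ceil2 by simp
  show "mu_star n 2 = (LEAST k::nat. even k \<and> mu n 2 \<le> k)"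
    unfolding mus_val[OF n] mu_val[OF assms]
    by (rule Least_equality[symmetric]) (auto simp: arith3 arith4)
qed


end
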